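(* Let $\varepsilon>0$ be a given security threshold (written $\mathsf{negl}(\lambda)$ in the paper) and let $\eta\in\mathbb{Z}^+$ satisfy $1/\eta<\varepsilon$. In the setting described in the context (with $M_o$ strictly positive definite), if \[ \frac{1}{\eta^2}\,\big\|M_c''\,(M_o')^{-1}\,M_c''\big\|\;\le\;\frac14\,\lambda_{\min}(M_o'), \] then both $M_f^{(0)}$ and $M_f^{(1)}$ are density matrices (Hermitian, positive semidefinite, trace one).
   Context: Let $d_1\ge d_2\ge 1$ be integers, $\mathcal H_M=(\mathbb C^2)^{\otimes d_1}$, $\mathcal H_{M_c}=(\mathbb C^2)^{\otimes d_2}$. For $n\ge 1$ and $k\in\{0,1\}^{2n}$ let $U_k=\bigotimes_{j=1}^{n}X^{k_{2j-1}}Z^{k_{2j}}$, where $X,Z$ are the Pauli matrices (quantum one-time pad). Let $M_o$ be a strictly positive definite density matrix on $\mathcal H_M$ and $M_c$ a density matrix on $\mathcal H_{M_c}$. For keys $k\in\{0,1\}^{2d_1}$, $k'\in\{0,1\}^{2d_2}$ put $M_o'=U_kM_oU_k^\dagger$ and $M_c'=U_{k'}M_cU_{k'}^\dagger$. Let $V:\mathcal H_{M_c}\to\mathcal H_M$ be the isometry $V|\psi\rangle=|\psi\rangle\otimes|0\rangle^{\otimes(d_1-d_2)}$ and $M_c''=VM_c'V^\dagger$. On $\mathbb C^2\otimes\mathcal H_M$ (block form with respect to the computational basis of the first, control, qubit) define \[ M_a^{(0)}=\begin{pmatrix}\tfrac12M_o'&0\\0&\tfrac12M_o'\end{pmatrix},\qquad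 M_a^{(1)}=\begin{pmatrix}\tfrac12M_o'&\tfrac1\eta M_c''\\ \tfrac1\eta (M_c'')^\dagger&\tfrac12M_o'\end{pmatrix}. \] For a $2^{d_1+1}\times2^{d_1+1}$ permutation matrix $U_\sigma$ let $M_f^{(b)}=U_\sigma M_a^{(b)}U_\sigma^\dagger$ for $b\in\{0,1\}$. Here $\|\cdot\|$ is the operator norm and $\lambda_{\min}$ the smallest eigenvalue. *)

theory Defs
  imports "Jordan_Normal_Form.Matrix" "Jordan_Normal_Form.Char_Poly"
    "HOL-Combinatorics.Permutations"
begin

definition adj :: "complex mat \<Rightarrow> complex mat" where
  "adj A = mat (dim_col A) (dim_row A) (\<lambda>(i,j). cnj (A $$ (j,i)))"

definition mtrace :: "complex mat \<Rightarrow> complex" where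
  "mtrace A = (\<Sum>i<dim_row A. A $$ (i,i))"

definition hermitian :: "complex mat \<Rightarrow> bool" where
  "hermitian A \<longleftrightarrow> square_mat A \<and> adj A = A"

definition qform :: "complex mat \<Rightarrow> complex vec \<Rightarrow> complex" where
  "qform A v = (\<Sum>i<dim_vec v. cnj (v $ i) * (A *\<^sub>v v) $ i)"

definition psd :: "complex mat \<Rightarrow> bool" where
  "psd A \<longleftrightarrow> hermitian A \<and>
     (\<forall>v \<in> carrier_vec (dim_row A). Im (qform A v) = 0 \<and> Re (qform A v) \<ge> 0)"

definition strictly_pd :: "complex mat \<Rightarrow> bool" where
  "strictly_pd A \<longleftrightarrow> hermitian A \<and>
     (\<forall>v \<in> carrier_vec (dim_row A). v \<noteq> 0\<^sub>v (dim_row A) \<longrightarrow>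
        Im (qform A v) = 0 \<and> Re (qform A v) > 0)"

definition density_matrix :: "nat \<Rightarrow> complex mat \<Rightarrow> bool" where
  "density_matrix n A \<longleftrightarrow> A \<in> carrier_mat n n \<and> hermitian A \<and> psd A \<and> mtrace A = 1"

definition mat_inv :: "complex mat \<Rightarrow> complex mat" where
  "mat_inv A = (SOME B. B \<in> carrier_mat (dim_row A) (dim_row A) \<and>
                   inverts_mat A B \<and> inverts_mat B A)"

definition vnorm :: "complex vec \<Rightarrow> real" where
  "vnorm v = sqrt (\<Sum>i<dim_vec v. (cmod (v $ i))\<^sup>2)"

definition op_norm :: "complex mat \<Rightarrow> real" where
  "op_norm A = Sup {vnorm (A *\<^sub>v v) | v. v \<in> carrier_vec (dim_col A) \<and> vnorm v \<le> 1}"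

(* smallest eigenvalue (the matrices it is applied to are Hermitian, so eigenvalues are real) *)
definition lambda_min :: "complex mat \<Rightarrow> real" where
  "lambda_min A = Min (Re ` {e. eigenvalue A e})"

definition kron :: "complex mat \<Rightarrow> complex mat \<Rightarrow> complex mat" where
  "kron A B = mat (dim_row A * dim_row B) (dim_col A * dim_col B)
     (\<lambda>(i,j). A $$ (i div dim_row B, j div dim_col B) * B $$ (i mod dim_row B, j mod dim_col B))"

definition pauliX :: "complex mat" where
  "pauliX = mat 2 2 (\<lambda>(i,j). if i \<noteq> j then 1 else 0)"

definition pauliZ :: "complex mat" where
  "pauliZ = mat 2 2 (\<lambda>(i,j). if i = j then (if i = 0 then 1 else -1) else 0)"

definition pad_factor :: "bool \<Rightarrow> bool \<Rightarrow> complex mat" where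
  "pad_factor a b = (if a then pauliX else 1\<^sub>m 2) * (if b then pauliZ else 1\<^sub>m 2)"

(* U_k = X^{k_1} Z^{k_2} \<otimes> ... \<otimes> X^{k_{2n-1}} Z^{k_{2n}};
   the key k is a bit list of length 2n, 0-indexed: k!(2j), k!(2j+1) for qubit j *)
fun otp_aux :: "nat \<Rightarrow> bool list \<Rightarrow> complex mat" where
  "otp_aux 0 k = 1\<^sub>m 1"
| "otp_aux (Suc n) k = kron (otp_aux n k) (pad_factor (k ! (2*n)) (k ! (2*n+1)))"

definition otp :: "bool list \<Rightarrow> complex mat" where
  "otp k = otp_aux (length k div 2) k"

definition ket_zeros :: "nat \<Rightarrow> complex mat" where
  "ket_zeros m = mat (2^m) 1 (\<lambda>(i,j). if i = 0 then 1 else 0)"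

definition embed_iso :: "nat \<Rightarrow> nat \<Rightarrow> complex mat" where
  "embed_iso d1 d2 = kron (1\<^sub>m (2^d2)) (ket_zeros (d1 - d2))"

definition perm_mat :: "nat \<Rightarrow> (nat \<Rightarrow> nat) \<Rightarrow> complex mat" where
  "perm_mat N \<sigma> = mat N N (\<lambda>(i,j). if i = \<sigma> j then 1 else 0)"

end

theory Submission
  imports Defs
begin

lemma adj_carrier[simp]: "A \<in> carrier_mat r c \<Longrightarrow> adj A \<in> carrier_mat c r"
  unfolding adj_def by auto
lemma adj_dims[simp]: "dim_row (adj A) = dim_col A" "dim_col (adj A) = dim_row A"
  unfolding adj_def by auto
lemma adj_index[simp]: "i < dim_col A \<Longrightarrow> j < dim_row A \<Longrightarrow> adj A $$ (i,j) = cnj (A $$ (j,i))"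
  unfolding adj_def by auto
lemma adj_adj[simp]: "adj (adj A) = A"
  by (rule eq_matI, auto)
lemma adj_mult: assumes "A \<in> carrier_mat n k" "B \<in> carrier_mat k m"
  shows "adj (A * B) = adj B * adj A"
  using assms by (intro eq_matI, auto simp: scalar_prod_def cnj_sum mult.commute)
lemma adj_one[simp]: "adj (1\<^sub>m n) = 1\<^sub>m n"
  by (rule eq_matI, auto)
lemma adj_zero[simp]: "adj (0\<^sub>m n m) = 0\<^sub>m m n"
  by (rule eq_matI, auto)
lemma adj_smult: "adj (c \<cdot>\<^sub>m A) = cnj c \<cdot>\<^sub>m adj A"
  by (rule eq_matI, auto)
lemma adj_four_block: assumes "A \<in> carrier_mat n n" "B \<in> carrier_mat n m" "C \<in> carrier_mat m n" "D \<in> carrier_mat m m"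
  shows "adj (four_block_mat A B C D) = four_block_mat (adj A) (adj C) (adj B) (adj D)"
  using assms by (intro eq_matI, auto)

definition ip :: "complex vec \<Rightarrow> complex vec \<Rightarrow> complex" where
  "ip u v = (\<Sum>i<dim_vec u. cnj (u $ i) * v $ i)"

lemma qform_ip: "qform A v = ip v (A *\<^sub>v v)"
  unfolding qform_def ip_def by simp

lemma mult_mat_vec_index: "A \<in> carrier_mat n m \<Longrightarrow> v \<in> carrier_vec m \<Longrightarrow> i < n \<Longrightarrow>
  (A *\<^sub>v v) $ i = (\<Sum>j<m. A $$ (i,j) * v $ j)"
  by (auto simp: scalar_prod_def atLeast0LessThan)

lemma ip_adj: assumes "A \<in> carrier_mat n m" "u \<in> carrier_vec n" "v \<in> carrier_vec m"
  shows "ip u (A *\<^sub>v v) = ip (adj A *\<^sub>v u) v"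
proof -
  have "ip u (A *\<^sub>v v) = (\<Sum>i<n. \<Sum>j<m. cnj (u $ i) * A $$ (i,j) * v $ j)"
    using assms unfolding ip_def
    by (auto simp: mult_mat_vec_index[OF assms(1,3)] sum_distrib_left mult.assoc simp del: index_mult_mat_vec intro!: sum.cong)
  also have "\<dots> = (\<Sum>j<m. \<Sum>i<n. cnj (u $ i) * A $$ (i,j) * v $ j)"
    by (rule sum.swap)
  also have "\<dots> = (\<Sum>j<m. cnj (\<Sum>i<n. adj A $$ (j,i) * u $ i) * v $ j)"
    using assms by (auto simp: cnj_sum sum_distrib_right intro!: sum.cong)
  also have "\<dots> = ip (adj A *\<^sub>v u) v"
    using assms unfolding ip_def
    by (intro sum.cong, simp_all add: mult_mat_vec_index[of "adj A" m n] del: index_mult_mat_vec)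
  finally show ?thesis .
qed

lemma ip_cnj: "dim_vec u = dim_vec v \<Longrightarrow> cnj (ip u v) = ip v u"
  unfolding ip_def by (auto simp: cnj_sum mult.commute)

lemma ip_add_right: "dim_vec v = dim_vec u \<Longrightarrow> dim_vec w = dim_vec u \<Longrightarrow> ip u (v + w) = ip u v + ip u w"
  unfolding ip_def by (auto simp: sum.distrib algebra_simps)
lemma ip_add_left: "dim_vec v = dim_vec u \<Longrightarrow> dim_vec w = dim_vec u \<Longrightarrow> ip (u + w) v = ip u v + ip w v"
  unfolding ip_def by (auto simp: sum.distrib algebra_simps)
lemma ip_smult_right: "dim_vec v = dim_vec u \<Longrightarrow> ip u (c \<cdot>\<^sub>v v) = c * ip u v"
  unfolding ip_def by (auto simp: sum_distrib_left algebra_simps)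
lemma ip_smult_left: "dim_vec v = dim_vec u \<Longrightarrow> ip (c \<cdot>\<^sub>v u) v = cnj c * ip u v"
  unfolding ip_def by (auto simp: sum_distrib_left algebra_simps)

definition nsq :: "complex vec \<Rightarrow> real" where
  "nsq v = (\<Sum>i<dim_vec v. (cmod (v $ i))\<^sup>2)"

lemma cnj_mult_self: "cnj z * z = (complex_of_real (cmod z))\<^sup>2"
proof -
  have "z * cnj z = of_real ((cmod z)^2)" by (rule complex_norm_square[symmetric])
  then show ?thesis by (simp add: mult.commute)
qed

lemma ip_self: "ip v v = of_real (nsq v)"
  unfolding ip_def nsq_def by (auto intro!: sum.cong simp: cnj_mult_self)
lemma nsq_nonneg: "nsq v \<ge> 0" unfolding nsq_def by (auto intro: sum_nonneg)
lemma nsq_zero: "v \<in> carrier_vec n \<Longrightarrow> nsq v = 0 \<longleftrightarrow> v = 0\<^sub>v n"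
  unfolding nsq_def by (auto simp: sum_nonneg_eq_0_iff)
lemma vnorm_nsq: "vnorm v = sqrt (nsq v)" unfolding vnorm_def nsq_def by simp


lemma herm_adj: "hermitian A \<Longrightarrow> adj A = A" unfolding hermitian_def by (rule conjunct2)
lemma herm_carrier: "hermitian A \<Longrightarrow> A \<in> carrier_mat (dim_row A) (dim_row A)"
proof -
  assume "hermitian A"
  then have "square_mat A" unfolding hermitian_def by (rule conjunct1)
  then show ?thesis unfolding carrier_mat_def by simp
qed
lemma herm_ip: assumes "hermitian A" "A \<in> carrier_mat n n" "x \<in> carrier_vec n" "y \<in> carrier_vec n"
  shows "ip x (A *\<^sub>v y) = ip (A *\<^sub>v x) y"
  using ip_adj[OF assms(2,3,4)] herm_adj[OF assms(1)] by simp

lemma herm_qform_real: assumes "hermitian A" "A \<in> carrier_mat n n" "v \<in> carrier_vec n"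
  shows "Im (qform A v) = 0"
proof -
  have "qform A v = ip (A *\<^sub>v v) v" unfolding qform_ip using herm_ip[OF assms(1,2,3,3)] .
  also have "\<dots> = cnj (qform A v)" unfolding qform_ip using assms by (subst ip_cnj, auto)
  finally have "qform A v = cnj (qform A v)" .
  then have "Im (qform A v) = Im (cnj (qform A v))" by simp
  then show ?thesis by simp
qed

lemma conj_herm: assumes "hermitian M" "M \<in> carrier_mat n n" "P \<in> carrier_mat r n"
  shows "hermitian (P * M * adj P)"
proof -
  have PM: "P * M \<in> carrier_mat r n" by (rule mult_carrier_mat[OF assms(3) assms(2)])
  have aP: "adj P \<in> carrier_mat n r" using assms(3) by (rule adj_carrier)
  have e1: "adj (P * M * adj P) = adj (adj P) * adj (P * M)"
    by (rule adj_mult[OF PM aP])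
  have e2: "adj (P * M) = adj M * adj P" by (rule adj_mult[OF assms(3,2)])
  have e3: "adj M = M" by (rule herm_adj[OF assms(1)])
  have e4: "P * (M * adj P) = P * M * adj P"
    by (rule assoc_mult_mat[symmetric, OF assms(3,2) aP])
  have e: "adj (P * M * adj P) = P * M * adj P" unfolding e1 e2 e3 adj_adj e4 ..
  have c: "P * M * adj P \<in> carrier_mat r r" by (rule mult_carrier_mat[OF PM aP])
  have sq: "square_mat (P * M * adj P)" using c unfolding carrier_mat_def by simp
  show ?thesis unfolding hermitian_def using sq e by (rule conjI)
qed

lemma conj_qform: assumes "M \<in> carrier_mat n n" "P \<in> carrier_mat r n" "v \<in> carrier_vec r"
  shows "qform (P * M * adj P) v = qform M (adj P *\<^sub>v v)"
proof -
  have aP: "adj P \<in> carrier_mat n r" using assms(2) by (rule adj_carrier)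
  have PM: "P * M \<in> carrier_mat r n" by (rule mult_carrier_mat[OF assms(2) assms(1)])
  have w: "adj P *\<^sub>v v \<in> carrier_vec n" by (rule mult_mat_vec_carrier[OF aP assms(3)])
  have "(P * M * adj P) *\<^sub>v v = (P * M) *\<^sub>v (adj P *\<^sub>v v)"
    by (rule assoc_mult_mat_vec[OF PM aP assms(3)])
  also have "\<dots> = P *\<^sub>v (M *\<^sub>v (adj P *\<^sub>v v))"
    by (rule assoc_mult_mat_vec[OF assms(2,1) w])
  finally have "(P * M * adj P) *\<^sub>v v = P *\<^sub>v (M *\<^sub>v (adj P *\<^sub>v v))" .
  moreover have "M *\<^sub>v (adj P *\<^sub>v v) \<in> carrier_vec n" by (rule mult_mat_vec_carrier[OF assms(1) w])
  ultimately show ?thesis unfolding qform_ip by (simp add: ip_adj[OF assms(2,3)])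
qed

lemma conj_psd: assumes "psd M" "M \<in> carrier_mat n n" "P \<in> carrier_mat r n"
  shows "psd (P * M * adj P)"
proof -
  have h: "hermitian (P * M * adj P)" using conj_herm assms unfolding psd_def by auto
  { fix v :: "complex vec" assume v: "v \<in> carrier_vec r"
    have "adj P *\<^sub>v v \<in> carrier_vec n" by (rule mult_mat_vec_carrier[OF adj_carrier[OF assms(3)] v])
    then have "Im (qform M (adj P *\<^sub>v v)) = 0 \<and> Re (qform M (adj P *\<^sub>v v)) \<ge> 0"
      using assms(1,2) unfolding psd_def by auto
    then have "Im (qform (P * M * adj P) v) = 0 \<and> Re (qform (P * M * adj P) v) \<ge> 0"
      using conj_qform[OF assms(2,3) v] by simp }
  then show ?thesis using h assms unfolding psd_def by auto
qed

lemma qform_expand: assumes "hermitian B" "B \<in> carrier_mat n n" "x \<in> carrier_vec n" "y \<in> carrier_vec n"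
  shows "qform B (x + c \<cdot>\<^sub>v y) = qform B x + c * ip x (B *\<^sub>v y) + cnj (c * ip x (B *\<^sub>v y))
     + cnj c * c * qform B y"
proof -
  have e: "B *\<^sub>v (x + c \<cdot>\<^sub>v y) = B *\<^sub>v x + c \<cdot>\<^sub>v (B *\<^sub>v y)"
    using assms by (simp add: mult_add_distrib_mat_vec[of B n n] mult_mat_vec[of B n n])
  have yx: "ip y (B *\<^sub>v x) = cnj (ip x (B *\<^sub>v y))"
    using assms by (simp add: herm_ip[OF assms(1,2,4,3)] ip_cnj)
  show ?thesis unfolding qform_ip e using assms
    by (simp add: ip_add_right ip_add_left ip_smult_right ip_smult_left yx algebra_simps)
qed

lemma gen_cs: assumes "psd B" "B \<in> carrier_mat n n" "x \<in> carrier_vec n" "y \<in> carrier_vec n"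
  shows "(cmod (ip x (B *\<^sub>v y)))\<^sup>2 \<le> Re (qform B x) * Re (qform B y)"
proof -
  define z where "z = ip x (B *\<^sub>v y)"
  define a where "a = Re (qform B x)"
  define b where "b = Re (qform B y)"
  have h: "hermitian B" using assms unfolding psd_def by auto
  have b0: "b \<ge> 0" using assms unfolding psd_def b_def by auto
  have key: "0 \<le> a - 2 * t * (cmod z)\<^sup>2 + t\<^sup>2 * (cmod z)\<^sup>2 * b" for t :: real
  proof -
    define c where "c = - (of_real t * cnj z)"
    have "x + c \<cdot>\<^sub>v y \<in> carrier_vec n" using assms by auto
    then have "0 \<le> Re (qform B (x + c \<cdot>\<^sub>v y))" using assms unfolding psd_def by auto
    also have "Re (qform B (x + c \<cdot>\<^sub>v y)) = a + 2 * Re (c * z) + Re (cnj c * c) * b"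
    proof -
      have "Im (qform B y) = 0" using herm_qform_real[OF h assms(2,4)] .
      have "cnj c * c = of_real ((cmod c)^2)" by (simp add: cnj_mult_self)
      then show ?thesis unfolding qform_expand[OF h assms(2-4)] a_def b_def z_def
        using \<open>Im (qform B y) = 0\<close> by simp
    qed
    also have "c * z = - of_real (t * (cmod z)\<^sup>2)"
      unfolding c_def using cnj_mult_self[of z] by (simp add: mult.commute)
    also have "cnj c * c = of_real (t\<^sup>2 * (cmod z)\<^sup>2)"
      unfolding c_def using cnj_mult_self[of z]
      by (simp add: power2_eq_square algebra_simps)
    finally show ?thesis by simp
  qed
  show ?thesis
  proof (cases "b = 0")
    case True
    show ?thesis
    proof (rule ccontr)
      assume "\<not> ?thesis"
      then have z0: "(cmod z)\<^sup>2 > 0" unfolding z_def[symmetric] a_def[symmetric] b_def[symmetric]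
        using True by (simp add: zero_less_power2 flip: z_def)
      have "0 \<le> a - 2 * ((a+1) / (2 * (cmod z)\<^sup>2)) * (cmod z)\<^sup>2" using key[of "(a+1) / (2 * (cmod z)\<^sup>2)"] True by simp
      also have "\<dots> = -1" using z0 by (simp add: field_simps)
      finally show False by simp
    qed
  next
    case False
    then have bp: "b > 0" using b0 by simp
    have "0 \<le> a - 2 * (1/b) * (cmod z)\<^sup>2 + (1/b)\<^sup>2 * (cmod z)\<^sup>2 * b" using key .
    also have "\<dots> = (a * b - (cmod z)\<^sup>2) / b" using bp by (simp add: field_simps power2_eq_square)
    finally have "0 \<le> a * b - (cmod z)\<^sup>2" using bp by (simp add: zero_le_divide_iff)
    then show ?thesis unfolding z_def a_def b_def by simp
  qed
qed

definition fro :: "complex mat \<Rightarrow> real" where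
  "fro M = (\<Sum>i<dim_row M. (\<Sum>j<dim_col M. cmod (M $$ (i,j)))\<^sup>2)"

lemma cmod_le_nsq: "j < dim_vec v \<Longrightarrow> cmod (v $ j) \<le> sqrt (nsq v)"
proof -
  assume j: "j < dim_vec v"
  have "(cmod (v $ j))\<^sup>2 \<le> nsq v" unfolding nsq_def
    using j by (intro member_le_sum, auto)
  then show ?thesis by (simp add: real_le_rsqrt)
qed

lemma fro_bound: assumes "M \<in> carrier_mat r c" "v \<in> carrier_vec c"
  shows "nsq (M *\<^sub>v v) \<le> fro M * nsq v"
proof -
  have "(cmod ((M *\<^sub>v v) $ i))\<^sup>2 \<le> (\<Sum>j<c. cmod (M $$ (i,j)))\<^sup>2 * nsq v" if i: "i < r" for i
  proof -
    have "cmod ((M *\<^sub>v v) $ i) \<le> (\<Sum>j<c. cmod (M $$ (i,j) * v $ j))"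
      unfolding mult_mat_vec_index[OF assms(1,2) i] by (rule norm_sum)
    also have "\<dots> \<le> (\<Sum>j<c. cmod (M $$ (i,j)) * sqrt (nsq v))"
      using assms by (auto simp: norm_mult intro!: sum_mono mult_left_mono cmod_le_nsq)
    also have "\<dots> = (\<Sum>j<c. cmod (M $$ (i,j))) * sqrt (nsq v)" by (simp add: sum_distrib_right)
    finally have "(cmod ((M *\<^sub>v v) $ i))\<^sup>2 \<le> ((\<Sum>j<c. cmod (M $$ (i,j))) * sqrt (nsq v))\<^sup>2"
      by (intro power_mono, auto)
    also have "\<dots> = (\<Sum>j<c. cmod (M $$ (i,j)))\<^sup>2 * nsq v" using nsq_nonneg[of v] by (simp add: power_mult_distrib)
    finally show ?thesis .
  qed
  then have "nsq (M *\<^sub>v v) \<le> (\<Sum>i<r. (\<Sum>j<c. cmod (M $$ (i,j)))\<^sup>2 * nsq v)"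
    unfolding nsq_def using assms by (auto intro!: sum_mono)
  also have "\<dots> = fro M * nsq v" unfolding fro_def using assms by (simp add: sum_distrib_right)
  finally show ?thesis .
qed

lemma fro_nonneg: "fro M \<ge> 0" unfolding fro_def by (auto intro: sum_nonneg)


lemma herm_one: "hermitian (1\<^sub>m n)"
  unfolding hermitian_def by simp

lemma qform_one: "v \<in> carrier_vec n \<Longrightarrow> qform (1\<^sub>m n) v = of_real (nsq v)"
  unfolding qform_ip by (simp add: ip_self)

lemma psd_one: "psd (1\<^sub>m n)"
  unfolding psd_def using herm_one qform_one by (auto simp: nsq_nonneg)

lemma ip_cs: assumes "u \<in> carrier_vec n" "w \<in> carrier_vec n"
  shows "(cmod (ip u w))\<^sup>2 \<le> nsq u * nsq w"
  using gen_cs[OF psd_one one_carrier_mat assms] assms by (simp add: qform_one)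

lemma qform_bound: assumes "A \<in> carrier_mat n n" "y \<in> carrier_vec n"
  shows "cmod (qform A y) \<le> sqrt (fro A) * nsq y"
proof -
  have Ay: "A *\<^sub>v y \<in> carrier_vec n" by (rule mult_mat_vec_carrier[OF assms])
  have "(cmod (qform A y))\<^sup>2 \<le> nsq y * nsq (A *\<^sub>v y)"
    unfolding qform_ip by (rule ip_cs[OF assms(2) Ay])
  also have "\<dots> \<le> nsq y * (fro A * nsq y)"
    by (rule mult_left_mono[OF fro_bound[OF assms] nsq_nonneg])
  also have "\<dots> = (sqrt (fro A) * nsq y)\<^sup>2"
    using fro_nonneg[of A] by (simp add: power_mult_distrib power2_eq_square)
  finally show ?thesis
    by (rule power2_le_imp_le, simp add: fro_nonneg nsq_nonneg)
qed

lemma shift_index: assumes "(A :: complex mat) \<in> carrier_mat n n" "y \<in> carrier_vec n" "i < n"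
  shows "((A - c \<cdot>\<^sub>m 1\<^sub>m n) *\<^sub>v y) $ i = (A *\<^sub>v y) $ i - c * y $ i"
proof -
  have B: "A - c \<cdot>\<^sub>m 1\<^sub>m n \<in> carrier_mat n n" using assms by auto
  have "((A - c \<cdot>\<^sub>m 1\<^sub>m n) *\<^sub>v y) $ i = (\<Sum>j<n. (A $$ (i,j) - (if i = j then c else 0)) * y $ j)"
    unfolding mult_mat_vec_index[OF B assms(2,3)] using assms by (intro sum.cong, auto simp: algebra_simps)
  also have "\<dots> = (\<Sum>j<n. A $$ (i,j) * y $ j - (if i = j then c * y $ j else 0))"
    by (intro sum.cong, auto simp: algebra_simps)
  also have "\<dots> = (\<Sum>j<n. A $$ (i,j) * y $ j) - (\<Sum>j<n. (if i = j then c * y $ j else 0))"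
    by (rule sum_subtractf)
  also have "\<dots> = (A *\<^sub>v y) $ i - c * y $ i"
    unfolding mult_mat_vec_index[OF assms] using assms(3) by simp
  finally show ?thesis .
qed

lemma shift_mult: assumes "(A :: complex mat) \<in> carrier_mat n n" "y \<in> carrier_vec n"
  shows "(A - c \<cdot>\<^sub>m 1\<^sub>m n) *\<^sub>v y = A *\<^sub>v y - c \<cdot>\<^sub>v y"
  using assms by (intro eq_vecI, auto simp: shift_index[OF assms] simp del: index_mult_mat_vec)

lemma shift_qform: assumes "A \<in> carrier_mat n n" "y \<in> carrier_vec n"
  shows "qform (A - c \<cdot>\<^sub>m 1\<^sub>m n) y = qform A y - c * of_real (nsq y)"
  unfolding qform_ip shift_mult[OF assms] using assms
  by (simp add: ip_def sum_subtractf algebra_simps sum_distrib_left flip: ip_self)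

lemma shift_herm: assumes "hermitian A" "A \<in> carrier_mat n n"
  shows "hermitian (A - of_real s \<cdot>\<^sub>m 1\<^sub>m n)"
proof -
  have e: "adj (A - of_real s \<cdot>\<^sub>m 1\<^sub>m n) = adj A - of_real s \<cdot>\<^sub>m 1\<^sub>m n"
    using assms(2) by (intro eq_matI, auto)
  have sq: "square_mat (A - of_real s \<cdot>\<^sub>m 1\<^sub>m n)" using assms(2) by simp
  show ?thesis unfolding hermitian_def using sq e herm_adj[OF assms(1)] by simp
qed

lemma eigen_finite: assumes "(A :: complex mat) \<in> carrier_mat n n"
  shows "finite {e. eigenvalue A e}"
proof -
  have "char_poly A \<noteq> 0" using degree_monic_char_poly[OF assms] by auto
  then have "finite {x. poly (char_poly A) x = 0}" by (rule poly_roots_finite)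
  then show ?thesis using eigenvalue_root_char_poly[OF assms] by simp
qed


lemma psd_kernel_bound: assumes "psd B" "B \<in> carrier_mat n n" "y \<in> carrier_vec n"
  shows "nsq (B *\<^sub>v y) \<le> sqrt (fro B) * Re (qform B y)"
proof -
  define w where "w = B *\<^sub>v y"
  have w: "w \<in> carrier_vec n" unfolding w_def by (rule mult_mat_vec_carrier[OF assms(2,3)])
  have q0: "Re (qform B y) \<ge> 0" using assms unfolding psd_def by auto
  have "(cmod (ip w (B *\<^sub>v y)))\<^sup>2 \<le> Re (qform B w) * Re (qform B y)"
    by (rule gen_cs[OF assms(1,2) w assms(3)])
  also have "Re (qform B w) \<le> sqrt (fro B) * nsq w"
    using qform_bound[OF assms(2) w] by (meson abs_Re_le_cmod abs_le_D1 order_trans)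
  then have "Re (qform B w) * Re (qform B y) \<le> sqrt (fro B) * nsq w * Re (qform B y)"
    using q0 by (rule mult_right_mono)
  finally have *: "(nsq w)\<^sup>2 \<le> sqrt (fro B) * nsq w * Re (qform B y)"
    unfolding w_def[symmetric] ip_self by simp
  show ?thesis
  proof (cases "nsq w = 0")
    case True then show ?thesis using q0 fro_nonneg[of B] by (simp add: w_def[symmetric])
  next
    case False
    then have p: "nsq w > 0" using nsq_nonneg[of w] by simp
    from * have "nsq w * nsq w \<le> nsq w * (sqrt (fro B) * Re (qform B y))"
      by (simp add: power2_eq_square algebra_simps)
    then have "nsq w \<le> sqrt (fro B) * Re (qform B y)" using p by simp
    then show ?thesis by (simp add: w_def)
  qed
qed

lemma rayleigh: assumes h: "hermitian A" and A: "A \<in> carrier_mat n n" and n: "n > 0"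
  shows "\<forall>y \<in> carrier_vec n. lambda_min A * nsq y \<le> Re (qform A y)"
proof -
  define S where "S = {t::real. \<forall>y\<in>carrier_vec n. t * nsq y \<le> Re (qform A y)}"
  define e :: "complex vec" where "e = unit_vec n 0"
  have e: "e \<in> carrier_vec n" unfolding e_def by simp
  have ne: "nsq e = 1"
  proof -
    have "nsq e = (\<Sum>i<n. if i = 0 then 1 else 0)" unfolding e_def nsq_def
      by (intro sum.cong) (auto simp: unit_vec_def)
    then show ?thesis using n by simp
  qed
  have bdd: "bdd_above S"
  proof
    fix t assume "t \<in> S" then show "t \<le> Re (qform A e)" using e ne unfolding S_def by force
  qed
  have mem: "- sqrt (fro A) \<in> S" unfolding S_def
  proof (intro CollectI ballI)
    fix y :: "complex vec" assume y: "y \<in> carrier_vec n"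
    have "- Re (qform A y) \<le> cmod (qform A y)" by (meson abs_Re_le_cmod abs_le_D2)
    then show "- sqrt (fro A) * nsq y \<le> Re (qform A y)" using qform_bound[OF A y] by simp
  qed
  define s where "s = Sup S"
  have sS: "s \<in> S" unfolding S_def
  proof (intro CollectI ballI)
    fix y :: "complex vec" assume y: "y \<in> carrier_vec n"
    show "s * nsq y \<le> Re (qform A y)"
    proof (rule ccontr)
      assume c: "\<not> ?thesis"
      have "nsq y \<noteq> 0"
      proof
        assume "nsq y = 0" then have "y = 0\<^sub>v n" using nsq_zero[OF y] by simp
        then have "qform A y = 0" unfolding qform_def using A by simp
        then show False using c \<open>nsq y = 0\<close> by simp
      qed
      then have p: "nsq y > 0" using nsq_nonneg[of y] by simp
      have "Re (qform A y) / nsq y < s" using c p by (simp add: divide_less_eq mult.commute)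
      then obtain t where t: "t \<in> S" "Re (qform A y) / nsq y < t"
        using less_cSup_iff[of S] mem bdd unfolding s_def by blast
      then have "t * nsq y \<le> Re (qform A y)" using y unfolding S_def by blast
      then have "t \<le> Re (qform A y) / nsq y" using p by (simp add: le_divide_eq)
      then show False using t by simp
    qed
  qed
  have notS: "\<exists>y\<in>carrier_vec n. Re (qform A y) < (s + eps) * nsq y" if eps: "eps > 0" for eps
  proof -
    have "s + eps \<notin> S" using cSup_upper[OF _ bdd, of "s + eps"] eps unfolding s_def by force
    then show ?thesis unfolding S_def by force
  qed
  define B where "B = A - of_real s \<cdot>\<^sub>m 1\<^sub>m n"
  have B: "B \<in> carrier_mat n n" unfolding B_def by (rule minus_carrier_mat, simp)
  have hB: "hermitian B" unfolding B_def by (rule shift_herm[OF h A])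
  have qB: "qform B y = qform A y - of_real (s * nsq y)" if y: "y \<in> carrier_vec n" for y
    unfolding B_def shift_qform[OF A y] by simp
  have psdB: "psd B" unfolding psd_def
  proof (intro conjI ballI hB)
    fix y :: "complex vec" assume y: "y \<in> carrier_vec (dim_row B)"
    then have y: "y \<in> carrier_vec n" using B by simp
    show "Im (qform B y) = 0" using herm_qform_real[OF hB B y] .
    show "Re (qform B y) \<ge> 0" using sS y unfolding qB[OF y] S_def by auto
  qed
  have "det B = 0"
  proof (rule ccontr)
    assume "det B \<noteq> 0"
    from det_non_zero_imp_unit[OF B this, of undefined]
    obtain Bi where Bi: "Bi \<in> carrier_mat n n" "Bi * B = 1\<^sub>m n"
      unfolding Units_def ring_mat_def by auto
    define K where "K = fro Bi * sqrt (fro B)"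
    have K0: "K \<ge> 0" unfolding K_def by (simp add: fro_nonneg)
    obtain y where y: "y \<in> carrier_vec n" and lt: "Re (qform A y) < (s + 1 / (K + 1)) * nsq y"
      using notS[of "1 / (K + 1)"] K0 by auto
    have ltB: "Re (qform B y) < 1 / (K + 1) * nsq y" using lt unfolding qB[OF y] by (simp add: algebra_simps)
    have "nsq y \<noteq> 0"
    proof
      assume "nsq y = 0" then have "y = 0\<^sub>v n" using nsq_zero[OF y] by simp
      then have "qform A y = 0" unfolding qform_def using A by simp
      then show False using lt \<open>nsq y = 0\<close> by simp
    qed
    then have p: "nsq y > 0" using nsq_nonneg[of y] by simp
    have By: "B *\<^sub>v y \<in> carrier_vec n" by (rule mult_mat_vec_carrier[OF B y])
    have "y = Bi *\<^sub>v (B *\<^sub>v y)" using Bi y B by (simp add: assoc_mult_mat_vec[symmetric, of _ n n _ n])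
    then have "nsq y \<le> fro Bi * nsq (B *\<^sub>v y)" using fro_bound[OF Bi(1) By] by simp
    also have "\<dots> \<le> fro Bi * (sqrt (fro B) * Re (qform B y))"
      by (rule mult_left_mono[OF psd_kernel_bound[OF psdB B y] fro_nonneg])
    also have "\<dots> = K * Re (qform B y)" unfolding K_def by simp
    also have "\<dots> \<le> K * (1 / (K + 1) * nsq y)" using ltB K0 by (intro mult_left_mono, auto)
    also have "\<dots> = (K / (K + 1)) * nsq y" by simp
    also have "\<dots> < 1 * nsq y" using p K0 by (intro mult_strict_right_mono, auto)
    finally show False by simp
  qed
  then obtain v where v: "v \<in> carrier_vec n" "v \<noteq> 0\<^sub>v n" "B *\<^sub>v v = 0\<^sub>v n"
    using det_0_iff_vec_prod_zero[OF B] by auto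
  have "A *\<^sub>v v = of_real s \<cdot>\<^sub>v v"
  proof -
    have "A *\<^sub>v v - of_real s \<cdot>\<^sub>v v = 0\<^sub>v n" using v(3) unfolding B_def shift_mult[OF A v(1)] .
    then have z: "\<And>i. i < n \<Longrightarrow> (A *\<^sub>v v - of_real s \<cdot>\<^sub>v v) $ i = 0" by simp
    show ?thesis
    proof (rule eq_vecI)
      show "dim_vec (A *\<^sub>v v) = dim_vec (of_real s \<cdot>\<^sub>v v)" using A v(1) by simp
      fix i assume "i < dim_vec (of_real s \<cdot>\<^sub>v v)"
      then have i: "i < n" using v(1) by simp
      have "(A *\<^sub>v v) $ i - of_real s * v $ i = 0" using z[OF i] A v(1) i by simp
      then show "(A *\<^sub>v v) $ i = (of_real s \<cdot>\<^sub>v v) $ i" using v(1) i by simp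
    qed
  qed
  then have ev: "eigenvalue A (of_real s)" unfolding eigenvalue_def eigenvector_def using v A by auto
  have "s \<in> Re ` {e. eigenvalue A e}" using ev by (intro image_eqI[of _ _ "of_real s"], auto)
  then have "lambda_min A \<le> s" unfolding lambda_min_def
    using eigen_finite[OF A] by (intro Min_le, auto)
  show ?thesis
  proof
    fix y :: "complex vec" assume y: "y \<in> carrier_vec n"
    have "lambda_min A * nsq y \<le> s * nsq y" by (rule mult_right_mono[OF \<open>lambda_min A \<le> s\<close> nsq_nonneg])
    also have "\<dots> \<le> Re (qform A y)" using sS y unfolding S_def by blast
    finally show "lambda_min A * nsq y \<le> Re (qform A y)" .
  qed
qed


lemma sum_split_add: "(\<Sum>i<(n::nat)+m. f i) = (\<Sum>i<n. f i) + (\<Sum>i<m. (f (n+i) :: 'a :: comm_monoid_add))"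
  by (induct m) (auto simp: add.assoc)

lemma pd_less: assumes "p < (b::nat)" "q < d" shows "p*d+q < b*d"
proof -
  have "p*d + q < p*d + d" using assms by simp
  also have "\<dots> = (p+1)*d" by simp
  also have "\<dots> \<le> b*d" using assms by (intro mult_right_mono, auto)
  finally show ?thesis .
qed

lemma sum_div_mod: assumes d: "(d::nat) > 0"
  shows "(\<Sum>k<b*d. g k) = (\<Sum>p<b. \<Sum>q<d. (g (p*d+q) :: 'a :: comm_monoid_add))"
proof -
  have "(\<Sum>k<b*d. g k) = (\<Sum>(p,q)\<in>{..<b}\<times>{..<d}. g (p*d+q))"
    apply (rule sum.reindex_bij_witness[where i="\<lambda>(p,q). p*d+q" and j="\<lambda>k. (k div d, k mod d)"])
    using d by (auto simp: less_mult_imp_div_less pd_less)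
  also have "\<dots> = (\<Sum>p<b. \<Sum>q<d. g (p*d+q))" by (simp add: sum.cartesian_product)
  finally show ?thesis .
qed

lemma kron_carrier[simp]: "A \<in> carrier_mat a b \<Longrightarrow> B \<in> carrier_mat c d \<Longrightarrow> kron A B \<in> carrier_mat (a*c) (b*d)"
  unfolding kron_def carrier_mat_def by auto

lemma kron_index: assumes "A \<in> carrier_mat a b" "B \<in> carrier_mat c d" "i < a*c" "j < b*d"
  shows "kron A B $$ (i,j) = A $$ (i div c, j div d) * B $$ (i mod c, j mod d)"
  using assms unfolding kron_def carrier_mat_def by auto

lemma kron_mult: assumes A: "A \<in> carrier_mat a b" and B: "B \<in> carrier_mat c d"
  and C: "C \<in> carrier_mat b e" and D: "D \<in> carrier_mat d f" and d: "d > 0" and c: "c > 0" and f: "f > 0"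
  shows "kron A B * kron C D = kron (A * C) (B * D)"
proof (rule eq_matI)
  show "dim_row (kron A B * kron C D) = dim_row (kron (A * C) (B * D))" using assms by (simp add: kron_def)
  show "dim_col (kron A B * kron C D) = dim_col (kron (A * C) (B * D))" using assms by (simp add: kron_def)
  fix i j assume "i < dim_row (kron (A * C) (B * D))" "j < dim_col (kron (A * C) (B * D))"
  then have i: "i < a*c" and j: "j < e*f" using assms by (auto simp: kron_def)
  have ic: "i div c < a" using i c by (simp add: less_mult_imp_div_less)
  have jf: "j div f < e" using j f by (simp add: less_mult_imp_div_less)
  have "(kron A B * kron C D) $$ (i,j) = (\<Sum>k<b*d. kron A B $$ (i,k) * kron C D $$ (k,j))"
    using assms i j by (simp add: scalar_prod_def atLeast0LessThan kron_def)
  also have "\<dots> = (\<Sum>p<b. \<Sum>q<d. kron A B $$ (i,p*d+q) * kron C D $$ (p*d+q,j))"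
    by (rule sum_div_mod[OF d])
  also have "\<dots> = (\<Sum>p<b. \<Sum>q<d. (A $$ (i div c, p) * C $$ (p, j div f)) * (B $$ (i mod c, q) * D $$ (q, j mod f)))"
  proof (intro sum.cong refl)
    fix p q assume p: "p \<in> {..<b}" and q: "q \<in> {..<d}"
    have pq: "p*d+q < b*d" using p q by (intro pd_less, auto)
    show "kron A B $$ (i,p*d+q) * kron C D $$ (p*d+q,j) = (A $$ (i div c, p) * C $$ (p, j div f)) * (B $$ (i mod c, q) * D $$ (q, j mod f))"
      using kron_index[OF A B i pq] kron_index[OF C D pq j] q d by (simp add: algebra_simps)
  qed
  also have "\<dots> = (\<Sum>p<b. A $$ (i div c, p) * C $$ (p, j div f)) * (\<Sum>q<d. B $$ (i mod c, q) * D $$ (q, j mod f))"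
    by (simp add: sum_product)
  also have "\<dots> = kron (A * C) (B * D) $$ (i,j)"
    using assms i j ic jf by (simp add: kron_index[of _ a e _ c f] scalar_prod_def atLeast0LessThan)
  finally show "(kron A B * kron C D) $$ (i,j) = kron (A * C) (B * D) $$ (i,j)" .
qed


lemma adj_kron: assumes A: "A \<in> carrier_mat a b" and B: "B \<in> carrier_mat c d" and c: "c > 0" and d: "d > 0"
  shows "adj (kron A B) = kron (adj A) (adj B)"
proof (rule eq_matI)
  show "dim_row (adj (kron A B)) = dim_row (kron (adj A) (adj B))" using assms by (simp add: kron_def)
  show "dim_col (adj (kron A B)) = dim_col (kron (adj A) (adj B))" using assms by (simp add: kron_def)
  fix i j assume "i < dim_row (kron (adj A) (adj B))" "j < dim_col (kron (adj A) (adj B))"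
  then have i: "i < b*d" and j: "j < a*c" using assms by (auto simp: kron_def)
  have id: "i div d < b" using i d by (simp add: less_mult_imp_div_less)
  have jc: "j div c < a" using j c by (simp add: less_mult_imp_div_less)
  show "adj (kron A B) $$ (i,j) = kron (adj A) (adj B) $$ (i,j)"
    using assms i j id jc
    by (simp add: kron_index[of "adj A" b a "adj B" d c] kron_index[OF A B] kron_def[of A B])
qed

lemma kron_one: assumes "b > 0" shows "kron (1\<^sub>m a) (1\<^sub>m b) = 1\<^sub>m (a*b)"
proof (rule eq_matI)
  fix i j assume "i < dim_row (1\<^sub>m (a*b))" "j < dim_col (1\<^sub>m (a*b))"
  then have i: "i < a*b" and j: "j < a*b" by auto
  have "(i div b = j div b \<and> i mod b = j mod b) \<longleftrightarrow> i = j"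
    by (metis div_mult_mod_eq)
  then show "kron (1\<^sub>m a) (1\<^sub>m b) $$ (i,j) = 1\<^sub>m (a*b) $$ (i,j)"
    using i j assms by (auto simp: kron_index[of _ a a _ b b] less_mult_imp_div_less)
qed (auto simp: kron_def)

definition unitary :: "nat \<Rightarrow> complex mat \<Rightarrow> bool" where
  "unitary n U \<longleftrightarrow> U \<in> carrier_mat n n \<and> adj U * U = 1\<^sub>m n"

lemma unitary_right: assumes "unitary n U" shows "U * adj U = 1\<^sub>m n"
  using assms unfolding unitary_def by (intro mat_mult_left_right_inverse[of "adj U" n], auto)

lemma unitary_mult: assumes "unitary n U" "unitary n V" shows "unitary n (U * V)"
proof -
  have U: "U \<in> carrier_mat n n" and V: "V \<in> carrier_mat n n" using assms unfolding unitary_def by auto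
  have aU: "adj U \<in> carrier_mat n n" and aV: "adj V \<in> carrier_mat n n" using U V by auto
  have "adj (U * V) * (U * V) = adj V * adj U * (U * V)" by (simp add: adj_mult[OF U V])
  also have "\<dots> = adj V * (adj U * (U * V))" by (rule assoc_mult_mat[OF aV aU], insert U V, auto)
  also have "adj U * (U * V) = (adj U * U) * V" by (rule assoc_mult_mat[symmetric, OF aU U V])
  also have "adj U * U = 1\<^sub>m n" using assms unfolding unitary_def by simp
  also have "1\<^sub>m n * V = V" using V by simp
  also have "adj V * V = 1\<^sub>m n" using assms unfolding unitary_def by simp
  finally show ?thesis unfolding unitary_def using U V by simp
qed

lemma unitary_kron: assumes "unitary a U" "unitary b V" "a > 0" "b > 0" shows "unitary (a*b) (kron U V)"
proof -
  have U: "U \<in> carrier_mat a a" and V: "V \<in> carrier_mat b b" using assms unfolding unitary_def by auto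
  have "adj (kron U V) * kron U V = kron (adj U) (adj V) * kron U V" using adj_kron[OF U V] assms by simp
  also have "\<dots> = kron (adj U * U) (adj V * V)"
    by (rule kron_mult[of _ a a _ b b _ a _ b], insert U V assms, auto)
  also have "\<dots> = 1\<^sub>m (a*b)" using assms kron_one unfolding unitary_def by simp
  finally show ?thesis unfolding unitary_def using U V by simp
qed

lemma unitary_one: "unitary n (1\<^sub>m n)" unfolding unitary_def by simp

lemma two_cases: "(i::nat) < 2 \<Longrightarrow> i = 0 \<or> i = 1" by auto

lemma sum2: "(\<Sum>k\<in>{0..<2::nat}. f k) = f 0 + (f 1 :: complex)"
proof -
  have "{0..<2::nat} = {0,1}" by auto
  then show ?thesis by simp
qed

lemma unitary_X: "unitary 2 pauliX"
  unfolding unitary_def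
proof
  show "pauliX \<in> carrier_mat 2 2" unfolding pauliX_def by simp
  show "adj pauliX * pauliX = 1\<^sub>m 2"
  proof (rule eq_matI)
    fix i j assume "i < dim_row (1\<^sub>m 2)" "j < dim_col (1\<^sub>m 2)"
    then have "i < 2" "j < 2" by auto
    then show "(adj pauliX * pauliX) $$ (i,j) = 1\<^sub>m 2 $$ (i,j)"
      unfolding pauliX_def using two_cases[of i] two_cases[of j]
      by (auto simp: scalar_prod_def sum2)
  qed (auto simp: pauliX_def)
qed

lemma unitary_Z: "unitary 2 pauliZ"
  unfolding unitary_def
proof
  show "pauliZ \<in> carrier_mat 2 2" unfolding pauliZ_def by simp
  show "adj pauliZ * pauliZ = 1\<^sub>m 2"
  proof (rule eq_matI)
    fix i j assume "i < dim_row (1\<^sub>m 2)" "j < dim_col (1\<^sub>m 2)"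
    then have "i < 2" "j < 2" by auto
    then show "(adj pauliZ * pauliZ) $$ (i,j) = 1\<^sub>m 2 $$ (i,j)"
      unfolding pauliZ_def using two_cases[of i] two_cases[of j]
      by (auto simp: scalar_prod_def sum2)
  qed (auto simp: pauliZ_def)
qed

lemma unitary_pad: "unitary 2 (pad_factor a b)"
  unfolding pad_factor_def by (intro unitary_mult, auto simp: unitary_X unitary_Z unitary_one)

lemma unitary_otp_aux: "unitary (2^n) (otp_aux n k)"
proof (induct n)
  case 0 then show ?case by (simp add: unitary_one)
next
  case (Suc n)
  have "unitary (2^n * 2) (otp_aux (Suc n) k)"
    unfolding otp_aux.simps by (rule unitary_kron[OF Suc unitary_pad], auto)
  then show ?case by (simp add: mult.commute)
qed

lemma unitary_otp: "length k = 2 * d \<Longrightarrow> unitary (2^d) (otp k)"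
  unfolding otp_def using unitary_otp_aux by simp

lemma unitary_perm: assumes "\<sigma> permutes {..<N}" shows "unitary N (perm_mat N \<sigma>)"
  unfolding unitary_def
proof
  show P: "perm_mat N \<sigma> \<in> carrier_mat N N" unfolding perm_mat_def by simp
  show "adj (perm_mat N \<sigma>) * perm_mat N \<sigma> = 1\<^sub>m N"
  proof (rule eq_matI)
    fix i j assume "i < dim_row (1\<^sub>m N)" "j < dim_col (1\<^sub>m N)"
    then have i: "i < N" and j: "j < N" by auto
    have si: "\<sigma> i < N" using permutes_in_image[OF assms] i by simp
    have inj: "\<sigma> i = \<sigma> j \<longleftrightarrow> i = j" using permutes_inj[OF assms] by (meson injD)
    have "(adj (perm_mat N \<sigma>) * perm_mat N \<sigma>) $$ (i,j) = (\<Sum>k<N. (if k = \<sigma> i then 1 else 0) * (if k = \<sigma> j then 1 else 0))"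
      using i j unfolding perm_mat_def by (auto simp: scalar_prod_def atLeast0LessThan intro!: sum.cong)
    also have "\<dots> = (\<Sum>k<N. if k = \<sigma> i then (if \<sigma> i = \<sigma> j then 1 else 0) else 0)"
      by (intro sum.cong, auto)
    also have "\<dots> = (if \<sigma> i = \<sigma> j then 1 else 0)" using si by (simp add: sum.delta)
    also have "\<dots> = 1\<^sub>m N $$ (i,j)" using inj i j by simp
    finally show "(adj (perm_mat N \<sigma>) * perm_mat N \<sigma>) $$ (i,j) = 1\<^sub>m N $$ (i,j)" .
  qed (auto simp: perm_mat_def)
qed

lemma mtrace_comm: assumes "A \<in> carrier_mat n m" "B \<in> carrier_mat m n"
  shows "mtrace (A * B) = mtrace (B * A)"
proof -
  have "mtrace (A * B) = (\<Sum>i<n. \<Sum>j<m. A $$ (i,j) * B $$ (j,i))"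
    unfolding mtrace_def using assms by (auto simp: scalar_prod_def atLeast0LessThan intro!: sum.cong)
  also have "\<dots> = (\<Sum>j<m. \<Sum>i<n. A $$ (i,j) * B $$ (j,i))" by (rule sum.swap)
  also have "\<dots> = mtrace (B * A)"
    unfolding mtrace_def using assms by (auto simp: scalar_prod_def atLeast0LessThan mult.commute intro!: sum.cong)
  finally show ?thesis .
qed

lemma mtrace_unitary_conj: assumes "unitary n U" "M \<in> carrier_mat n n"
  shows "mtrace (U * M * adj U) = mtrace M"
proof -
  have U: "U \<in> carrier_mat n n" using assms unfolding unitary_def by auto
  have "mtrace (U * M * adj U) = mtrace (adj U * (U * M))"
    by (rule mtrace_comm[of _ n n], insert U assms, auto)
  also have "adj U * (U * M) = (adj U * U) * M" using U assms by (simp add: assoc_mult_mat[of _ n n _ n _ n])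
  also have "\<dots> = M" using assms unfolding unitary_def by simp
  finally show ?thesis .
qed


lemma ip_append: assumes "x \<in> carrier_vec n" "y \<in> carrier_vec m" "u \<in> carrier_vec n" "w \<in> carrier_vec m"
  shows "ip (x @\<^sub>v y) (u @\<^sub>v w) = ip x u + ip y w"
  unfolding ip_def using assms by (simp add: sum_split_add)

lemma sq_carrier: assumes "A \<in> carrier_mat n n" shows "square_mat A"
proof -
  have "dim_col A = n" "dim_row A = n" using assms by (auto dest: carrier_matD)
  then show ?thesis unfolding square_mat.simps by (rule trans[OF _ sym])
qed

lemma smult_mat_vec: assumes "A \<in> carrier_mat n m" "v \<in> carrier_vec m"
  shows "(k \<cdot>\<^sub>m A) *\<^sub>v v = k \<cdot>\<^sub>v (A *\<^sub>v v)"
proof (rule eq_vecI)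
  fix i assume "i < dim_vec (k \<cdot>\<^sub>v (A *\<^sub>v v))"
  then have i: "i < n" using assms by simp
  have r: "row A i \<in> carrier_vec m" using assms i by auto
  show "((k \<cdot>\<^sub>m A) *\<^sub>v v) $ i = (k \<cdot>\<^sub>v (A *\<^sub>v v)) $ i"
    using assms i smult_scalar_prod_distrib[OF r assms(2)] by simp
qed (insert assms, auto)

lemma block_psd_core:
  assumes pA: "psd A" and A: "A \<in> carrier_mat n n" and hC: "hermitian C" and C: "C \<in> carrier_mat n n"
    and c: "c \<ge> 0"
    and H: "\<And>x y. x \<in> carrier_vec n \<Longrightarrow> y \<in> carrier_vec n \<Longrightarrow>
       (2 * c * cmod (ip x (C *\<^sub>v y)))\<^sup>2 \<le> Re (qform A x) * Re (qform A y)"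
  shows "psd (four_block_mat ((1/2) \<cdot>\<^sub>m A) (of_real c \<cdot>\<^sub>m C) (of_real c \<cdot>\<^sub>m C) ((1/2) \<cdot>\<^sub>m A))"
proof -
  define M where "M = four_block_mat ((1/2) \<cdot>\<^sub>m A) (of_real c \<cdot>\<^sub>m C) (of_real c \<cdot>\<^sub>m C) ((1/2) \<cdot>\<^sub>m A)"
  have hA: "hermitian A" using pA unfolding psd_def by auto
  have A2: "(1/2) \<cdot>\<^sub>m A \<in> carrier_mat n n" using A by simp
  have C2: "of_real c \<cdot>\<^sub>m C \<in> carrier_mat n n" using C by simp
  have M: "M \<in> carrier_mat (n+n) (n+n)" unfolding M_def using A2 by simp
  have adjA2: "adj ((1/2) \<cdot>\<^sub>m A) = (1/2) \<cdot>\<^sub>m A" unfolding adj_smult herm_adj[OF hA] by simp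
  have adjC2: "adj (of_real c \<cdot>\<^sub>m C) = of_real c \<cdot>\<^sub>m C" unfolding adj_smult herm_adj[OF hC] by simp
  have "adj M = M" unfolding M_def adj_four_block[OF A2 C2 C2 A2] adjA2 adjC2 ..
  moreover have "square_mat M" by (rule sq_carrier[OF M])
  ultimately have hM: "hermitian M" unfolding hermitian_def by (intro conjI)
  have main: "Im (qform M v) = 0 \<and> 0 \<le> Re (qform M v)" if v: "v \<in> carrier_vec (n+n)" for v
  proof -
    define x where "x = vec_first v n"
    define y where "y = vec_last v n"
    have x: "x \<in> carrier_vec n" and y: "y \<in> carrier_vec n" unfolding x_def y_def by auto
    have v': "v = x @\<^sub>v y" unfolding x_def y_def using v by simp
    have Ax: "A *\<^sub>v x \<in> carrier_vec n" "A *\<^sub>v y \<in> carrier_vec n" "C *\<^sub>v x \<in> carrier_vec n" "C *\<^sub>v y \<in> carrier_vec n"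
      using A C x y by auto
    have Mv: "M *\<^sub>v v = ((1/2) \<cdot>\<^sub>v (A *\<^sub>v x) + of_real c \<cdot>\<^sub>v (C *\<^sub>v y)) @\<^sub>v (of_real c \<cdot>\<^sub>v (C *\<^sub>v x) + (1/2) \<cdot>\<^sub>v (A *\<^sub>v y))"
      unfolding v' M_def four_block_mat_mult_vec[OF A2 C2 C2 A2 x y]
      using A C x y by (simp add: smult_mat_vec[OF A] smult_mat_vec[OF C])
    define z where "z = ip x (C *\<^sub>v y)"
    define a where "a = Re (qform A x)"
    define b where "b = Re (qform A y)"
    have dx: "dim_vec x = n" "dim_vec y = n" "dim_vec (A *\<^sub>v x) = n" "dim_vec (A *\<^sub>v y) = n"
      "dim_vec (C *\<^sub>v x) = n" "dim_vec (C *\<^sub>v y) = n" using x y A C by auto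
    have yx1: "ip y (C *\<^sub>v x) = ip (C *\<^sub>v y) x" by (rule herm_ip[OF hC C y x])
    have yx2: "cnj (ip x (C *\<^sub>v y)) = ip (C *\<^sub>v y) x" by (rule ip_cnj, simp add: dx carrier_matD[OF C])
    have yx: "ip y (C *\<^sub>v x) = cnj z" unfolding z_def yx1 yx2 ..
    have ImA: "Im (qform A x) = 0" "Im (qform A y) = 0" using herm_qform_real[OF hA A] x y by auto
    have a0: "a \<ge> 0" "b \<ge> 0" using pA A x y unfolding psd_def a_def b_def by auto
    have P: "(1/2) \<cdot>\<^sub>v (A *\<^sub>v x) + of_real c \<cdot>\<^sub>v (C *\<^sub>v y) \<in> carrier_vec n" using Ax by auto
    have Q: "of_real c \<cdot>\<^sub>v (C *\<^sub>v x) + (1/2) \<cdot>\<^sub>v (A *\<^sub>v y) \<in> carrier_vec n" using Ax by auto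
    have q1: "qform M v = ip x ((1/2) \<cdot>\<^sub>v (A *\<^sub>v x) + of_real c \<cdot>\<^sub>v (C *\<^sub>v y))
        + ip y (of_real c \<cdot>\<^sub>v (C *\<^sub>v x) + (1/2) \<cdot>\<^sub>v (A *\<^sub>v y))"
      unfolding qform_ip Mv unfolding v' by (rule ip_append[OF x y P Q])
    have q2: "ip x ((1/2) \<cdot>\<^sub>v (A *\<^sub>v x) + of_real c \<cdot>\<^sub>v (C *\<^sub>v y)) = (1/2) * qform A x + of_real c * z"
      unfolding qform_ip z_def using dx by (simp add: ip_add_right ip_smult_right)
    have q3: "ip y (of_real c \<cdot>\<^sub>v (C *\<^sub>v x) + (1/2) \<cdot>\<^sub>v (A *\<^sub>v y)) = of_real c * cnj z + (1/2) * qform A y"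
      unfolding qform_ip yx[symmetric] using dx by (simp add: ip_add_right ip_smult_right)
    have q: "qform M v = (1/2) * qform A x + (1/2) * qform A y + of_real c * (z + cnj z)"
      unfolding q1 q2 q3 by (simp add: algebra_simps)
    have zr: "z + cnj z = of_real (2 * Re z)" by (simp add: complex_add_cnj)
    have Req: "Re (qform M v) = (a + b) / 2 + 2 * c * Re z" unfolding q zr a_def b_def by simp
    have Imq: "Im (qform M v) = 0" unfolding q zr using ImA by simp
    have "(2 * c * cmod z)\<^sup>2 \<le> a * b" unfolding z_def a_def b_def by (rule H[OF x y])
    also have "a * b \<le> ((a + b) / 2)\<^sup>2"
    proof -
      have "((a + b) / 2)\<^sup>2 - a * b = ((a - b) / 2)\<^sup>2" by (simp add: power2_eq_square field_simps)
      then show ?thesis using zero_le_power2[of "(a - b) / 2"] by linarith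
    qed
    finally have "2 * c * cmod z \<le> (a + b) / 2" by (rule power2_le_imp_le, insert a0, simp)
    moreover have "- cmod z \<le> Re z" using abs_Re_le_cmod[of z] by linarith
    then have "(2 * c) * (- cmod z) \<le> (2 * c) * Re z" using c by (intro mult_left_mono, auto)
    then have "- (2 * c * cmod z) \<le> 2 * c * Re z" by simp
    ultimately have "0 \<le> Re (qform M v)" unfolding Req by linarith
    then show ?thesis using Imq by simp
  qed
  show ?thesis unfolding M_def[symmetric] psd_def using hM main M by auto
qed


lemma nsq_smult: "nsq (k \<cdot>\<^sub>v v) = (cmod k)\<^sup>2 * nsq v"
  unfolding nsq_def by (simp add: sum_distrib_left norm_mult power_mult_distrib)

lemma vnorm_smult: "vnorm (k \<cdot>\<^sub>v v) = cmod k * vnorm v"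
  unfolding vnorm_nsq nsq_smult by (simp add: real_sqrt_mult)

lemma op_norm_bound: assumes M: "M \<in> carrier_mat r c" and y: "y \<in> carrier_vec c"
  shows "vnorm (M *\<^sub>v y) \<le> op_norm M * vnorm y" "op_norm M \<ge> 0"
proof -
  define S where "S = {vnorm (M *\<^sub>v v) | v. v \<in> carrier_vec (dim_col M) \<and> vnorm v \<le> 1}"
  have dc: "dim_col M = c" using M by auto
  have bdd: "bdd_above S"
  proof (rule bdd_aboveI)
    fix t assume "t \<in> S"
    then obtain v where t: "t = vnorm (M *\<^sub>v v)" and v: "v \<in> carrier_vec c" "vnorm v \<le> 1"
      unfolding S_def dc by auto
    have "nsq v \<le> 1" using v(2) unfolding vnorm_nsq by simp
    have "nsq (M *\<^sub>v v) \<le> fro M * nsq v" by (rule fro_bound[OF M v(1)])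
    also have "\<dots> \<le> fro M * 1" by (rule mult_left_mono[OF \<open>nsq v \<le> 1\<close> fro_nonneg])
    finally show "t \<le> sqrt (fro M)" unfolding t vnorm_nsq by simp
  qed
  have z: "0 \<in> S"
  proof -
    have "vnorm (M *\<^sub>v 0\<^sub>v c) = 0" using M unfolding vnorm_def by simp
    moreover have "vnorm (0\<^sub>v c :: complex vec) \<le> 1" unfolding vnorm_def by simp
    ultimately show ?thesis unfolding S_def dc by force
  qed
  have op: "op_norm M = Sup S" unfolding op_norm_def S_def ..
  show nn: "op_norm M \<ge> 0" unfolding op using cSup_upper[OF z bdd] .
  show "vnorm (M *\<^sub>v y) \<le> op_norm M * vnorm y"
  proof (cases "vnorm y = 0")
    case True
    then have "nsq y = 0" unfolding vnorm_nsq by simp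
    then have "y = 0\<^sub>v c" using nsq_zero[OF y] by simp
    then have "vnorm (M *\<^sub>v y) = 0" using M unfolding vnorm_def by simp
    then show ?thesis using True by simp
  next
    case False
    then have t: "vnorm y > 0" unfolding vnorm_nsq using nsq_nonneg[of y] by simp
    define u where "u = complex_of_real (1 / vnorm y) \<cdot>\<^sub>v y"
    have u: "u \<in> carrier_vec c" unfolding u_def using y by simp
    have "vnorm u = 1" unfolding u_def vnorm_smult using t by (simp add: norm_divide)
    have Mu: "M *\<^sub>v u = complex_of_real (1 / vnorm y) \<cdot>\<^sub>v (M *\<^sub>v y)"
      unfolding u_def by (rule mult_mat_vec[OF M y])
    have "vnorm (M *\<^sub>v u) \<in> S" unfolding S_def dc using u \<open>vnorm u = 1\<close> by auto
    then have "vnorm (M *\<^sub>v u) \<le> op_norm M" unfolding op by (rule cSup_upper[OF _ bdd])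
    then have "vnorm (M *\<^sub>v y) / vnorm y \<le> op_norm M" unfolding Mu vnorm_smult using t by (simp add: norm_divide)
    then show ?thesis using t by (simp add: divide_le_eq mult.commute)
  qed
qed

lemma ip_op_bound: assumes M: "M \<in> carrier_mat n n" and y: "y \<in> carrier_vec n"
  shows "cmod (ip y (M *\<^sub>v y)) \<le> op_norm M * nsq y"
proof -
  have My: "M *\<^sub>v y \<in> carrier_vec n" using M y by simp
  have b: "vnorm (M *\<^sub>v y) \<le> op_norm M * vnorm y" and nn: "op_norm M \<ge> 0"
    using op_norm_bound[OF M y] by auto
  have "nsq (M *\<^sub>v y) = (vnorm (M *\<^sub>v y))\<^sup>2" unfolding vnorm_nsq by (rule real_sqrt_pow2[symmetric], rule nsq_nonneg)
  also have "\<dots> \<le> (op_norm M * vnorm y)\<^sup>2" by (rule power_mono[OF b], simp add: vnorm_nsq nsq_nonneg)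
  also have "\<dots> = (op_norm M)\<^sup>2 * nsq y" unfolding vnorm_nsq using nsq_nonneg[of y] by (simp add: power_mult_distrib)
  finally have nb: "nsq (M *\<^sub>v y) \<le> (op_norm M)\<^sup>2 * nsq y" .
  have "(cmod (ip y (M *\<^sub>v y)))\<^sup>2 \<le> nsq y * nsq (M *\<^sub>v y)" by (rule ip_cs[OF y My])
  also have "\<dots> \<le> nsq y * ((op_norm M)\<^sup>2 * nsq y)" by (rule mult_left_mono[OF nb nsq_nonneg])
  also have "\<dots> = (op_norm M * nsq y)\<^sup>2" by (simp add: power2_eq_square algebra_simps)
  finally have "(cmod (ip y (M *\<^sub>v y)))\<^sup>2 \<le> (op_norm M * nsq y)\<^sup>2" .
  then show ?thesis by (rule power2_le_imp_le, insert nn nsq_nonneg[of y], simp)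
qed

lemma block_H:
  assumes pA: "psd A" and A: "A \<in> carrier_mat n n" and hC: "hermitian C" and C: "C \<in> carrier_mat n n"
    and Ai: "Ai \<in> carrier_mat n n" and inv: "A * Ai = 1\<^sub>m n" and n: "n > 0" and eta: "(eta::real) > 0"
    and cond: "1 / eta\<^sup>2 * op_norm (C * Ai * C) \<le> 1/4 * lambda_min A"
    and x: "x \<in> carrier_vec n" and y: "y \<in> carrier_vec n"
  shows "(2 * (1/eta) * cmod (ip x (C *\<^sub>v y)))\<^sup>2 \<le> Re (qform A x) * Re (qform A y)"
proof -
  have hA: "hermitian A" using pA unfolding psd_def by auto
  define w where "w = C *\<^sub>v y"
  define u where "u = Ai *\<^sub>v w"
  have w: "w \<in> carrier_vec n" unfolding w_def using C y by simp
  have u: "u \<in> carrier_vec n" unfolding u_def using Ai w by simp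
  have Au: "A *\<^sub>v u = w" unfolding u_def
    using assoc_mult_mat_vec[OF A Ai w, symmetric] inv w by simp
  define a where "a = Re (qform A x)"
  define b where "b = Re (qform A y)"
  define op where "op = op_norm (C * Ai * C)"
  have a0: "a \<ge> 0" using pA A x unfolding psd_def a_def by auto
  have CAC: "C * Ai * C \<in> carrier_mat n n" using C Ai by simp
  have "(cmod (ip x (C *\<^sub>v y)))\<^sup>2 \<le> a * Re (qform A u)"
    unfolding a_def w_def[symmetric] Au[symmetric] by (rule gen_cs[OF pA A x u])
  also have "Re (qform A u) \<le> op * nsq y"
  proof -
    have "qform A u = ip u w" unfolding qform_ip Au ..
    also have "\<dots> = cnj (ip w u)" using ip_cnj[of w u] u w by simp
    finally have "Re (qform A u) = Re (ip w u)" by simp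
    also have "ip w u = ip y (C *\<^sub>v (Ai *\<^sub>v (C *\<^sub>v y)))"
      unfolding u_def w_def using herm_ip[OF hC C y, of "Ai *\<^sub>v (C *\<^sub>v y)"] C Ai y by simp
    also have "C *\<^sub>v (Ai *\<^sub>v (C *\<^sub>v y)) = (C * Ai * C) *\<^sub>v y"
      using C Ai y by (simp add: assoc_mult_mat_vec[of _ n n _ n])
    also have "Re (ip y ((C * Ai * C) *\<^sub>v y)) \<le> cmod (ip y ((C * Ai * C) *\<^sub>v y))" by (rule complex_Re_le_cmod)
    also have "\<dots> \<le> op * nsq y" unfolding op_def by (rule ip_op_bound[OF CAC y])
    finally show ?thesis .
  qed
  also have "op * nsq y \<le> (eta\<^sup>2 / 4 * lambda_min A) * nsq y"
  proof (rule mult_right_mono[OF _ nsq_nonneg])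
    have "op = eta\<^sup>2 * (1 / eta\<^sup>2 * op)" using eta by simp
    also have "\<dots> \<le> eta\<^sup>2 * (1/4 * lambda_min A)" using cond eta unfolding op_def by (intro mult_left_mono, auto)
    finally show "op \<le> eta\<^sup>2 / 4 * lambda_min A" by simp
  qed
  also have "\<dots> = eta\<^sup>2 / 4 * (lambda_min A * nsq y)" by simp
  also have "\<dots> \<le> eta\<^sup>2 / 4 * b" unfolding b_def using rayleigh[OF hA A n] y by (intro mult_left_mono, auto)
  finally have "(cmod (ip x (C *\<^sub>v y)))\<^sup>2 \<le> a * (eta\<^sup>2 / 4 * b)" using a0 by (simp add: mult_left_mono)
  then have "4 / eta\<^sup>2 * (cmod (ip x (C *\<^sub>v y)))\<^sup>2 \<le> 4 / eta\<^sup>2 * (a * (eta\<^sup>2 / 4 * b))"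
    using eta by (intro mult_left_mono, auto)
  also have "\<dots> = a * b" using eta by (simp add: field_simps)
  finally show ?thesis unfolding a_def[symmetric] b_def[symmetric]
    by (simp add: power_mult_distrib power_divide field_simps)
qed


lemma conj_carrier: assumes "P \<in> carrier_mat r n" "M \<in> carrier_mat n n"
  shows "P * M * adj P \<in> carrier_mat r r"
  by (rule mult_carrier_mat[OF mult_carrier_mat[OF assms] adj_carrier[OF assms(1)]])

lemma mult_zero_vec_r: assumes "A \<in> carrier_mat r n" shows "A *\<^sub>v 0\<^sub>v n = (0\<^sub>v r :: complex vec)"
proof (rule eq_vecI)
  fix i assume "i < dim_vec (0\<^sub>v r :: complex vec)"
  then have i: "i < r" by simp
  show "(A *\<^sub>v 0\<^sub>v n) $ i = (0\<^sub>v r :: complex vec) $ i"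
    unfolding mult_mat_vec_index[OF assms zero_carrier_vec i] using i by simp
qed (insert assms, auto)

lemma final_density: assumes U: "unitary N U" and M: "Ma \<in> carrier_mat N N" and p: "psd Ma" and t: "mtrace Ma = 1"
  shows "density_matrix N (U * Ma * adj U)"
proof -
  have Uc: "U \<in> carrier_mat N N" using U unfolding unitary_def by auto
  have c: "U * Ma * adj U \<in> carrier_mat N N" by (rule conj_carrier[OF Uc M])
  have h: "hermitian Ma" using p unfolding psd_def by auto
  show ?thesis unfolding density_matrix_def
    using c conj_herm[OF h M Uc] conj_psd[OF p M Uc] mtrace_unitary_conj[OF U M] t by auto
qed

lemma mtrace_block: assumes A: "A \<in> carrier_mat n n" and B: "B \<in> carrier_mat n n" and C: "C \<in> carrier_mat n n"
  shows "mtrace (four_block_mat ((1/2) \<cdot>\<^sub>m A) B C ((1/2) \<cdot>\<^sub>m A)) = mtrace A"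
proof -
  have "mtrace (four_block_mat ((1/2) \<cdot>\<^sub>m A) B C ((1/2) \<cdot>\<^sub>m A))
      = (\<Sum>i<n+n. four_block_mat ((1/2) \<cdot>\<^sub>m A) B C ((1/2) \<cdot>\<^sub>m A) $$ (i,i))"
    unfolding mtrace_def using A by simp
  also have "\<dots> = (\<Sum>i<n. (1/2) * A $$ (i,i)) + (\<Sum>i<n. (1/2) * A $$ (i,i))"
    unfolding sum_split_add using A by simp
  also have "\<dots> = (\<Sum>i<n. A $$ (i,i))" by (subst sum.distrib[symmetric], rule sum.cong, auto)
  also have "\<dots> = mtrace A" unfolding mtrace_def using A by simp
  finally show ?thesis .
qed

lemma inverse_exists: assumes A: "(A :: complex mat) \<in> carrier_mat n n"
  and ker: "\<And>v. v \<in> carrier_vec n \<Longrightarrow> A *\<^sub>v v = 0\<^sub>v n \<Longrightarrow> v = 0\<^sub>v n"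
  shows "mat_inv A \<in> carrier_mat n n \<and> A * mat_inv A = 1\<^sub>m n"
proof -
  have "det A \<noteq> 0" using det_0_iff_vec_prod_zero[OF A] ker by blast
  from det_non_zero_imp_unit[OF A this, of undefined]
  obtain Bi where Bi: "Bi \<in> carrier_mat n n" "Bi * A = 1\<^sub>m n" "A * Bi = 1\<^sub>m n"
    unfolding Units_def ring_mat_def by auto
  have dr: "dim_row A = n" using A by auto
  have ex: "\<exists>B. B \<in> carrier_mat (dim_row A) (dim_row A) \<and> inverts_mat A B \<and> inverts_mat B A"
    using Bi dr unfolding inverts_mat_def by (intro exI[of _ Bi], auto)
  have "mat_inv A \<in> carrier_mat (dim_row A) (dim_row A) \<and> inverts_mat A (mat_inv A) \<and> inverts_mat (mat_inv A) A"
    unfolding mat_inv_def by (rule someI_ex[OF ex])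
  then show ?thesis unfolding inverts_mat_def dr by auto
qed

lemma herm_zero: "hermitian (0\<^sub>m n n)"
  unfolding hermitian_def by (intro conjI, simp, simp)

lemma embed_carrier: assumes "d2 \<le> d1" shows "embed_iso d1 d2 \<in> carrier_mat (2^d1) (2^d2)"
proof -
  have k: "ket_zeros (d1 - d2) \<in> carrier_mat (2^(d1-d2)) 1" unfolding ket_zeros_def by simp
  have "embed_iso d1 d2 \<in> carrier_mat (2^d2 * 2^(d1-d2)) (2^d2 * 1)"
    unfolding embed_iso_def by (rule kron_carrier[OF one_carrier_mat k])
  moreover have "(2::nat)^d2 * 2^(d1-d2) = 2^d1" using assms by (simp add: power_add[symmetric])
  ultimately show ?thesis by simp
qed

theorem theorem12:
  fixes d1 d2 \<eta> :: nat and \<epsilon> :: real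
    and Mo Mc :: "complex mat" and k k' :: "bool list" and \<sigma> :: "nat \<Rightarrow> nat"
    and Mo' Mc' Mc'' Ma0 Ma1 U :: "complex mat"
  assumes "d1 \<ge> d2" and "d2 \<ge> 1"
    and "\<epsilon> > 0" and "\<eta> > 0" and "1 / real \<eta> < \<epsilon>"
    and "density_matrix (2^d1) Mo" and "strictly_pd Mo"
    and "density_matrix (2^d2) Mc"
    and "length k = 2 * d1" and "length k' = 2 * d2"
    and "\<sigma> permutes {..<2^(d1+1)}"
  assumes "Mo' = otp k * Mo * adj (otp k)"
    and "Mc' = otp k' * Mc * adj (otp k')"
    and "Mc'' = embed_iso d1 d2 * Mc' * adj (embed_iso d1 d2)"
    and "Ma0 = four_block_mat ((1/2) \<cdot>\<^sub>m Mo') (0\<^sub>m (2^d1) (2^d1))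
                              (0\<^sub>m (2^d1) (2^d1)) ((1/2) \<cdot>\<^sub>m Mo')"
    and "Ma1 = four_block_mat ((1/2) \<cdot>\<^sub>m Mo') ((1 / of_nat \<eta>) \<cdot>\<^sub>m Mc'')
                              ((1 / of_nat \<eta>) \<cdot>\<^sub>m adj Mc'') ((1/2) \<cdot>\<^sub>m Mo')"
    and "U = perm_mat (2^(d1+1)) \<sigma>"
  assumes "1 / (real \<eta>)\<^sup>2 * op_norm (Mc'' * mat_inv Mo' * Mc'') \<le> 1/4 * lambda_min Mo'"
  shows "density_matrix (2^(d1+1)) (U * Ma0 * adj U) \<and> density_matrix (2^(d1+1)) (U * Ma1 * adj U)"
proof -
  define n where "n = (2::nat)^d1"
  define m where "m = (2::nat)^d2"
  have n0: "n > 0" unfolding n_def by simp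
  have N: "(2::nat)^(d1+1) = n + n" unfolding n_def by simp
  have Mo: "Mo \<in> carrier_mat n n" "hermitian Mo" "psd Mo" "mtrace Mo = 1"
    using assms(6) unfolding density_matrix_def n_def by auto
  have Mc: "Mc \<in> carrier_mat m m" "hermitian Mc"
    using assms(8) unfolding density_matrix_def m_def by auto
  have uP: "unitary n (otp k)" unfolding n_def by (rule unitary_otp[OF assms(9)])
  have uQ: "unitary m (otp k')" unfolding m_def by (rule unitary_otp[OF assms(10)])
  have P: "otp k \<in> carrier_mat n n" using uP unfolding unitary_def by auto
  have Q: "otp k' \<in> carrier_mat m m" using uQ unfolding unitary_def by auto
  have E: "embed_iso d1 d2 \<in> carrier_mat n m" unfolding n_def m_def by (rule embed_carrier[OF assms(1)])
  have A: "Mo' \<in> carrier_mat n n" unfolding assms(12) by (rule conj_carrier[OF P Mo(1)])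
  have hA: "hermitian Mo'" unfolding assms(12) by (rule conj_herm[OF Mo(2,1) P])
  have pA: "psd Mo'" unfolding assms(12) by (rule conj_psd[OF Mo(3,1) P])
  have tA: "mtrace Mo' = 1" unfolding assms(12) using mtrace_unitary_conj[OF uP Mo(1)] Mo(4) by simp
  have Mc': "Mc' \<in> carrier_mat m m" unfolding assms(13) by (rule conj_carrier[OF Q Mc(1)])
  have hMc': "hermitian Mc'" unfolding assms(13) by (rule conj_herm[OF Mc(2,1) Q])
  have C: "Mc'' \<in> carrier_mat n n" unfolding assms(14) by (rule conj_carrier[OF E Mc'])
  have hC: "hermitian Mc''" unfolding assms(14) by (rule conj_herm[OF hMc' Mc' E])
  have ker: "v = 0\<^sub>v n" if v: "v \<in> carrier_vec n" and Av: "Mo' *\<^sub>v v = 0\<^sub>v n" for v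
  proof -
    have w: "adj (otp k) *\<^sub>v v \<in> carrier_vec n" by (rule mult_mat_vec_carrier[OF adj_carrier[OF P] v])
    have "qform Mo' v = 0" unfolding qform_ip Av ip_def using v by (intro sum.neutral, auto)
    then have q0: "qform Mo (adj (otp k) *\<^sub>v v) = 0" unfolding assms(12) conj_qform[OF Mo(1) P v] .
    have dMo: "dim_row Mo = n" using Mo(1) by auto
    have "adj (otp k) *\<^sub>v v = 0\<^sub>v n"
    proof (rule ccontr)
      assume "adj (otp k) *\<^sub>v v \<noteq> 0\<^sub>v n"
      then have "Re (qform Mo (adj (otp k) *\<^sub>v v)) > 0" using assms(7) w dMo unfolding strictly_pd_def by auto
      then show False using q0 by simp
    qed
    then have "otp k *\<^sub>v (adj (otp k) *\<^sub>v v) = 0\<^sub>v n" using mult_zero_vec_r[OF P] by simp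
    moreover have "otp k *\<^sub>v (adj (otp k) *\<^sub>v v) = v"
      using assoc_mult_mat_vec[OF P adj_carrier[OF P] v, symmetric] unitary_right[OF uP] v by simp
    ultimately show ?thesis by simp
  qed
  have inv: "mat_inv Mo' \<in> carrier_mat n n \<and> Mo' * mat_inv Mo' = 1\<^sub>m n"
    by (rule inverse_exists[OF A ker])
  have uU: "unitary (n + n) U" unfolding assms(17) N[symmetric] by (rule unitary_perm[OF assms(11)])
  have z: "complex_of_real 0 \<cdot>\<^sub>m 0\<^sub>m n n = 0\<^sub>m n n" by (rule eq_matI, auto)
  have z': "complex_of_real 0 \<cdot>\<^sub>m 0\<^sub>m (2^d1) (2^d1) = 0\<^sub>m (2^d1) (2^d1)" by (rule eq_matI, auto)
  have Ma0e: "Ma0 = four_block_mat ((1/2) \<cdot>\<^sub>m Mo') (complex_of_real 0 \<cdot>\<^sub>m 0\<^sub>m n n) (complex_of_real 0 \<cdot>\<^sub>m 0\<^sub>m n n) ((1/2) \<cdot>\<^sub>m Mo')"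
    unfolding assms(15) n_def z' ..
  have pMa0: "psd Ma0" unfolding Ma0e
  proof (rule block_psd_core[OF pA A herm_zero zero_carrier_mat])
    fix x y :: "complex vec" assume x: "x \<in> carrier_vec n" and y: "y \<in> carrier_vec n"
    have "Re (qform Mo' x) \<ge> 0" "Re (qform Mo' y) \<ge> 0" using pA A x y unfolding psd_def by auto
    then show "(2 * 0 * cmod (ip x (0\<^sub>m n n *\<^sub>v y)))\<^sup>2 \<le> Re (qform Mo' x) * Re (qform Mo' y)" by simp
  qed simp
  have cMa0: "Ma0 \<in> carrier_mat (n+n) (n+n)" unfolding Ma0e using A by simp
  have tMa0: "mtrace Ma0 = 1" unfolding Ma0e using mtrace_block[OF A zero_carrier_mat zero_carrier_mat] tA z by simp
  have ce: "(1 / of_nat \<eta> :: complex) = complex_of_real (1 / real \<eta>)" by simp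
  have Ma1e: "Ma1 = four_block_mat ((1/2) \<cdot>\<^sub>m Mo') (complex_of_real (1 / real \<eta>) \<cdot>\<^sub>m Mc'') (complex_of_real (1 / real \<eta>) \<cdot>\<^sub>m Mc'') ((1/2) \<cdot>\<^sub>m Mo')"
    unfolding assms(16) ce herm_adj[OF hC] ..
  have pMa1: "psd Ma1" unfolding Ma1e
  proof (rule block_psd_core[OF pA A hC C])
    fix x y :: "complex vec" assume x: "x \<in> carrier_vec n" and y: "y \<in> carrier_vec n"
    show "(2 * (1 / real \<eta>) * cmod (ip x (Mc'' *\<^sub>v y)))\<^sup>2 \<le> Re (qform Mo' x) * Re (qform Mo' y)"
      by (rule block_H[OF pA A hC C conjunct1[OF inv] conjunct2[OF inv] n0 _ assms(18) x y], insert assms(4), simp)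
  qed simp
  have cMa1: "Ma1 \<in> carrier_mat (n+n) (n+n)" unfolding Ma1e using A by simp
  have tMa1: "mtrace Ma1 = 1" unfolding Ma1e using mtrace_block[OF A smult_carrier_mat[OF C] smult_carrier_mat[OF C]] tA by simp
  show ?thesis unfolding N
    using final_density[OF uU cMa0 pMa0 tMa0] final_density[OF uU cMa1 pMa1 tMa1] by simp
qed

end
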